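(* Let $d\ge1$ and $\theta\in[0,\pi)$. Let $a,b$ be independent $\chi_d$-distributed random variables, and let $W=\sqrt{a^2+b^2+2ab\cos\theta}$ (equivalently, $W=\|\boldsymbol{w}_i+\boldsymbol{w}_j\|_2$ for random vectors $\boldsymbol{w}_i,\boldsymbol{w}_j\in\mathbb{R}^d$ with independent $\chi_d$-distributed norms $a,b$ conditioned to subtend the fixed angle $\theta$). Then $W$ has probability density, for $w\ge0$, $$p_\theta(w)=\frac{w^{2d-1}}{2^{d-2}\Gamma(\frac d2)^2}\int_{0}^{\pi/2}(\sin\phi\cos\phi)^{d-1}\frac{\exp\!\Big(-\frac{w^2}{2(1+\sin2\phi\cos\theta)}\Big)}{(1+\sin2\phi\cos\theta)^{d}}\,\mathrm{d}\phi.$$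
   Context: The $\chi_d$ distribution is the law of the Euclidean norm of a $\mathcal{N}(0,\mathbf{I}_d)$ vector, with density $\frac{x^{d-1}e^{-x^2/2}}{2^{d/2-1}\Gamma(d/2)}$ on $x\ge0$. *)

theory Defs
  imports "HOL-Probability.Probability"
begin

definition chi_density :: "nat \<Rightarrow> real \<Rightarrow> real" where
  "chi_density d x =
     (if 0 \<le> x then x ^ (d - 1) * exp (- (x\<^sup>2) / 2) / (2 powr (real d / 2 - 1) * Gamma (real d / 2))
      else 0)"

definition p_theta :: "nat \<Rightarrow> real \<Rightarrow> real \<Rightarrow> real" where
  "p_theta d \<theta> w =
     (if 0 \<le> w then
        w ^ (2 * d - 1) / (2 powr (real d - 2) * (Gamma (real d / 2))\<^sup>2) *
        (LBINT \<phi>=0..pi/2. (sin \<phi> * cos \<phi>) ^ (d - 1) *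
            exp (- (w\<^sup>2) / (2 * (1 + sin (2 * \<phi>) * cos \<theta>))) /
            (1 + sin (2 * \<phi>) * cos \<theta>) ^ d)
      else 0)"

end

theory Submission
  imports Defs
begin

lemma indep_lborel:
  assumes "prob_space M" "prob_space.indep_var M borel a borel b"
  shows "prob_space.indep_var M lborel a lborel b"
proof -
  interpret P: prob_space M by fact
  have e1: "sets (case_bool lborel lborel i) = sets (case_bool borel borel i)" for i :: bool
    by (simp split: bool.split)
  have e2: "measurable M (case_bool lborel lborel i) = measurable M (case_bool borel borel i)" for i :: bool
    by (simp split: bool.split)
  show ?thesis using assms(2) unfolding P.indep_var_def P.indep_vars_def e1 e2 .
qed

lemma alg_tan:
  fixes k :: nat and w t c x :: real
  assumes c: "c > 0" and pyth: "x^2 + c^2 = 1"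
  shows "(x/c)^k / (1+(x/c)^2+2*(x/c)*t)^(Suc k) *
           exp (-(w^2)*(1+(x/c)^2)/(2*(1+(x/c)^2+2*(x/c)*t))) * inverse (c^2)
       = (x * c)^k * exp (- (w^2) / (2 * (1 + 2*x*c * t))) / (1 + 2*x*c * t) ^ Suc k"
proof -
  have q: "1+(x/c)^2+2*(x/c)*t = (1 + 2*x*c*t) / c^2"
    using c pyth by (simp add: field_simps power2_eq_square)
  have e: "-(w^2)*(1+(x/c)^2)/(2*(1+(x/c)^2+2*(x/c)*t)) = - (w^2) / (2 * (1 + 2*x*c * t))"
  proof (cases "1 + 2*x*c*t = 0")
    case True then show ?thesis unfolding q by simp
  next
    case False
    have "1+(x/c)^2 = 1/c^2" using c pyth by (simp add: field_simps)
    then show ?thesis unfolding q using c False by (simp add: field_simps)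
  qed
  have pw: "(x/c)^k / (S/c^2)^(Suc k) * inverse (c^2) = (x * c)^k / S ^ Suc k" for S
  proof -
    have c2: "(c^2)^Suc k = c^k*c^k*c^2" by (simp add: power_mult_distrib power2_eq_square)
    have "(x/c)^k / (S/c^2)^(Suc k) * inverse (c^2) = x^k/c^k * (c^k*c^k*c^2) / S^Suc k / c^2"
      by (simp add: power_divide c2 divide_simps power2_eq_square power_mult_distrib)
    also have "\<dots> = (x * c)^k / S ^ Suc k" using c by (simp add: power_mult_distrib)
    finally show ?thesis .
  qed
  have P: "(x/c)^k / ((1 + 2*x*c*t) / c^2)^(Suc k) * inverse (c^2)
        = (x * c)^k / (1 + 2*x*c * t) ^ Suc k" by (rule pw)
  have gen: "A / B * X * I = R * X / D" if h: "A / B * I = R / D" for A B X I R D :: real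
  proof -
    have "A / B * X * I = (A / B * I) * X" by (simp only: mult.assoc mult.commute[of X I])
    also have "\<dots> = R / D * X" by (simp only: h)
    finally show ?thesis by simp
  qed
  show ?thesis by (subst e, subst q, rule gen[OF P])
qed

lemma ennreal_mult_ind: "ennreal (a * indicator S x) = ennreal a * indicator S x"
  by (simp split: split_indicator)

lemma pos_aux: fixes y t :: real assumes "0 \<le> y" "y \<le> 1" "-1 < t" shows "1 + y * t > 0"
proof (cases "y = 1")
  case True then show ?thesis using assms by simp
next
  case False
  have "y * t \<ge> y * (-1)" using assms by (intro mult_left_mono) auto
  then show ?thesis using assms False by simp
qed

lemma s_pos: fixes t \<phi> :: real assumes "-1 < t" "0 \<le> \<phi>" "\<phi> \<le> pi/2"
  shows "1 + sin (2*\<phi>) * t > 0"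
  by (rule pos_aux) (use assms in \<open>auto intro: sin_ge_zero\<close>)

lemma key:
  fixes k :: nat and t w :: real
  assumes t: "-1 < t"
  defines "G \<equiv> \<lambda>u. u^k / (1+u^2+2*u*t)^(Suc k) * exp (-(w^2)*(1+u^2)/(2*(1+u^2+2*u*t)))"
  defines "K \<equiv> \<lambda>\<phi>. (sin \<phi> * cos \<phi>)^k * exp (- (w^2) / (2 * (1 + sin (2*\<phi>) * t))) / (1 + sin (2*\<phi>) * t) ^ Suc k"
  shows "(\<integral>\<^sup>+u. ennreal (G u) * indicator {0..} u \<partial>lborel) = ennreal (LBINT \<phi>=0..pi/2. K \<phi>)"
proof -
  have Gm[measurable]: "G \<in> borel_measurable borel" unfolding G_def by measurable
  have Km[measurable]: "K \<in> borel_measurable borel" unfolding K_def by measurable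
  have sub: "(\<integral>\<^sup>+u. ennreal (G u) * indicator {0..tan b} u \<partial>lborel)
      = (\<integral>\<^sup>+\<phi>. ennreal (K \<phi>) * indicator {0..b} \<phi> \<partial>lborel)" if b: "0 \<le> b" "b < pi/2" for b
  proof -
    have cpos: "cos x > 0" if "x \<in> {0..b}" for x using that b by (intro cos_gt_zero_pi) auto
    have "(\<integral>\<^sup>+u. ennreal (G u * indicator {tan 0..tan b} u) \<partial>lborel)
       = (\<integral>\<^sup>+x. ennreal (G (tan x) * inverse (cos x ^ 2) * indicator {0..b} x) \<partial>lborel)"
    proof (rule nn_integral_substitution)
      show "set_borel_measurable borel {tan 0..tan b} G" unfolding set_borel_measurable_def by measurable
      show "(tan has_real_derivative inverse (cos x ^ 2)) (at x)" if "x \<in> {0..b}" for x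
        using cpos[OF that] by (intro DERIV_tan) auto
      show "continuous_on {0..b} (\<lambda>x. inverse (cos x ^ 2))"
        using cpos by (intro continuous_intros) (auto simp: less_irrefl dest!: cpos)
    qed (use b in auto)
    also have "\<dots> = (\<integral>\<^sup>+\<phi>. ennreal (K \<phi>) * indicator {0..b} \<phi> \<partial>lborel)"
    proof (rule nn_integral_cong)
      fix x :: real
      show "ennreal (G (tan x) * inverse (cos x ^ 2) * indicator {0..b} x) = ennreal (K x) * indicator {0..b} x"
      proof (cases "x \<in> {0..b}")
        case True
        have "G (tan x) * inverse (cos x ^ 2) = K x"
          unfolding G_def K_def tan_def sin_double
          by (rule alg_tan) (use cpos[OF True] in auto)
        then show ?thesis using True by simp
      qed simp
    qed
    finally show ?thesis by (simp add: ennreal_mult_ind)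
  qed
  let ?\<mu> = "density lborel (\<lambda>u. ennreal (G u))"
  let ?\<nu> = "density lborel (\<lambda>u. ennreal (K u))"
  have U1: "(\<Union>n. {0..real n}) = {0::real..}"
    by (auto intro: real_arch_simple)
  have U2: "(\<Union>n. {0..arctan (real n)}) = {0..<pi/2}"
  proof
    show "(\<Union>n. {0..arctan (real n)}) \<subseteq> {0..<pi/2}" 

    proof (rule UN_least)
      fix n :: nat show "{0..arctan (real n)} \<subseteq> {0..<pi/2}" using arctan_bounded[of "real n"] by auto
    qed
    show "{0..<pi/2} \<subseteq> (\<Union>n. {0..arctan (real n)})"
    proof
      fix x :: real assume x: "x \<in> {0..<pi/2}"
      obtain n :: nat where n: "tan x \<le> real n" using real_arch_simple by blast
      have "x = arctan (tan x)" using x by (subst arctan_tan) auto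
      also have "\<dots> \<le> arctan (real n)" using n by (simp add: arctan_le_iff)
      finally show "x \<in> (\<Union>n. {0..arctan (real n)})" using x by auto
    qed
  qed
  have inc1: "incseq (\<lambda>n. {0..real n})" by (auto simp: incseq_def)
  have inc2: "incseq (\<lambda>n. {0..arctan (real n)})" by (auto simp: incseq_def arctan_le_iff)
  have "(\<integral>\<^sup>+u. ennreal (G u) * indicator {0..} u \<partial>lborel) = emeasure ?\<mu> {0..}"
    by (simp add: emeasure_density)
  also have "\<dots> = (SUP n. emeasure ?\<mu> {0..real n})"
    unfolding U1[symmetric] by (rule SUP_emeasure_incseq[symmetric]) (use inc1 in auto)
  also have "\<dots> = (SUP n. emeasure ?\<nu> {0..arctan (real n)})"
  proof (rule SUP_cong[OF refl])
    fix n :: nat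
    have "emeasure ?\<mu> {0..real n} = emeasure ?\<mu> {0..tan (arctan (real n))}" by (simp add: tan_arctan)
    also have "\<dots> = emeasure ?\<nu> {0..arctan (real n)}"
      using sub[of "arctan (real n)"] arctan_bounded[of "real n"] by (simp add: emeasure_density)
    finally show "emeasure ?\<mu> {0..real n} = emeasure ?\<nu> {0..arctan (real n)}" .
  qed
  also have "\<dots> = emeasure ?\<nu> {0..<pi/2}"
    unfolding U2[symmetric] by (rule SUP_emeasure_incseq) (use inc2 in auto)
  also have "\<dots> = (\<integral>\<^sup>+\<phi>. ennreal (K \<phi>) * indicator {0..<pi/2} \<phi> \<partial>lborel)"
    by (simp add: emeasure_density)
  also have "\<dots> = (\<integral>\<^sup>+\<phi>. ennreal (indicator {0..pi/2} \<phi> *\<^sub>R K \<phi>) \<partial>lborel)"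
    by (intro nn_integral_cong_AE eventually_mono[OF AE_lborel_singleton[of "pi/2"]])
       (auto split: split_indicator)
  also have "\<dots> = ennreal (\<integral>\<phi>. indicator {0..pi/2} \<phi> *\<^sub>R K \<phi> \<partial>lborel)"
  proof (rule nn_integral_eq_integral)
    have "continuous_on {0..pi/2} K" unfolding K_def
      using s_pos[OF t] by (intro continuous_intros) (auto simp: less_irrefl dest!: s_pos[OF t])
    then show "integrable lborel (\<lambda>\<phi>. indicator {0..pi/2} \<phi> *\<^sub>R K \<phi>)"
      by (intro borel_integrable_compact) auto
    show "AE x in lborel. 0 \<le> indicator {0..pi/2} x *\<^sub>R K x"
    proof (intro AE_I2)
      fix x :: real
      show "0 \<le> indicator {0..pi/2} x *\<^sub>R K x"
      proof (cases "x \<in> {0..pi/2}")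
        case True
        then have "0 \<le> sin x" "0 \<le> cos x" "0 < 1 + sin (2*x) * t"
          using s_pos[OF t, of x] by (auto intro!: sin_ge_zero cos_ge_zero)
        then show ?thesis using True unfolding K_def by simp
      qed simp
    qed
  qed
  also have "\<dots> = ennreal (LBINT \<phi>=0..pi/2. K \<phi>)"
    using interval_integral_Icc[of 0 "pi/2" K] by (simp add: set_lebesgue_integral_def zero_ereal_def)
  finally show ?thesis .
qed

lemma alg1:
  fixes x u :: real and k :: nat
  shows "x * (x^k * exp (-(x^2)/2) * ((x*u)^k * exp (-((x*u)^2)/2)))
       = x^(2*k+1) * u^k * exp (-(x^2)*(1+u^2)/2)"
proof -
  have e: "exp (-(x^2)/2) * exp (-((x*u)^2)/2) = exp (-(x^2)*(1+u^2)/2)"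
    by (simp add: exp_add[symmetric] power_mult_distrib algebra_simps add_divide_distrib)
  have p: "x^(2*k+1) = x * x^k * x^k" by (simp add: mult_2 power_add)
  have "x * (x^k * exp (-(x^2)/2) * ((x*u)^k * exp (-((x*u)^2)/2)))
     = (x * x^k * x^k) * u^k * (exp (-(x^2)/2) * exp (-((x*u)^2)/2))"
    by (simp add: power_mult_distrib ac_simps)
  also have "\<dots> = x^(2*k+1) * u^k * exp (-(x^2)*(1+u^2)/2)" by (simp only: p e)
  finally show ?thesis .
qed

lemma alg2:
  fixes r w u :: real and k :: nat
  assumes r: "r > 0"
  shows "1/r * ((w/r)^(2*k+1) * u^k * exp (-((w/r)^2)*(1+u^2)/2))
       = w^(2*k+1) * (u^k / (r^2)^Suc k * exp (-(w^2)*(1+u^2)/(2*r^2)))"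
proof -
  have e: "-((w/r)^2)*(1+u^2)/2 = -(w^2)*(1+u^2)/(2*r^2)" using r by (simp add: power_divide field_simps)
  have p: "(r^2)^Suc k = r^(2*k+1) * r" by (simp add: power_mult[symmetric] mult_2 power_add power2_eq_square power_mult_distrib)
  show ?thesis unfolding e p using r by (simp add: power_divide field_simps)
qed

lemma sq:
  fixes x u t :: real assumes "x > 0" "1+u^2+2*u*t \<ge> 0"
  shows "sqrt (x^2 + (x*u)^2 + 2*x*(x*u)*t) = x * sqrt (1+u^2+2*u*t)"
proof -
  have "x^2 + (x*u)^2 + 2*x*(x*u)*t = x^2 * (1+u^2+2*u*t)" by (simp add: algebra_simps power_mult_distrib power2_eq_square)
  then show ?thesis using assms by (simp add: real_sqrt_mult)
qed


lemma q_pos: fixes u t :: real assumes "-1 < t" "0 \<le> u" shows "1+u^2+2*u*t > 0"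
proof (cases "u = 0")
  case False
  have "2*u*t \<ge> 2*u*(-1)" using assms by (intro mult_left_mono) auto
  moreover have "(u-1)^2 = u^2 - 2*u + 1" by (simp add: power2_eq_square algebra_simps)
  moreover have "(u-1)^2 \<ge> 0" by simp
  moreover have "2*u*t > 2*u*(-1)" using assms False by (intro mult_strict_left_mono) auto
  ultimately show ?thesis by linarith
qed simp

lemma chain:
  fixes k :: nat and t :: real and h :: "real \<Rightarrow> ennreal"
  assumes t: "-1 < t" and h[measurable]: "h \<in> borel_measurable borel"
  defines "f \<equiv> \<lambda>x::real. if 0 \<le> x then x^k * exp (-(x^2)/2) else 0"
  defines "K \<equiv> \<lambda>w \<phi>. (sin \<phi> * cos \<phi>)^k * exp (- (w^2) / (2 * (1 + sin (2*\<phi>) * t))) / (1 + sin (2*\<phi>) * t) ^ Suc k"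
  shows "(\<integral>\<^sup>+x. \<integral>\<^sup>+y. ennreal (f x) * ennreal (f y) * h (sqrt (x^2+y^2+2*x*y*t)) \<partial>lborel \<partial>lborel)
        = (\<integral>\<^sup>+w. ennreal (if 0 < w then w^(2*k+1) * (LBINT \<phi>=0..pi/2. K w \<phi>) else 0) * h w \<partial>lborel)"
proof -
  define q where "q u = 1+u^2+2*u*t" for u
  define A where "A x u = ennreal (if 0 < x \<and> 0 \<le> u then x^(2*k+1) * u^k * exp (-(x^2)*(1+u^2)/2) else 0)
      * h (x * sqrt (q u))" for x u
  define G where "G w u = u^k / (q u)^(Suc k) * exp (-(w^2)*(1+u^2)/(2*(q u)))" for w u
  define B where "B w u = ennreal (if 0 < w \<and> 0 \<le> u then w^(2*k+1) * G w u else 0) * h w" for w u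
  have [measurable]: "q \<in> borel_measurable borel" unfolding q_def by measurable
  have [measurable]: "f \<in> borel_measurable borel" unfolding f_def by measurable
  have Am[measurable]: "case_prod A \<in> borel_measurable (lborel \<Otimes>\<^sub>M lborel)" unfolding A_def by measurable
  have Bm[measurable]: "case_prod B \<in> borel_measurable (lborel \<Otimes>\<^sub>M lborel)" unfolding B_def G_def by measurable
  have "(\<integral>\<^sup>+x. \<integral>\<^sup>+y. ennreal (f x) * ennreal (f y) * h (sqrt (x^2+y^2+2*x*y*t)) \<partial>lborel \<partial>lborel)
      = (\<integral>\<^sup>+x. \<integral>\<^sup>+u. A x u \<partial>lborel \<partial>lborel)"
  proof (rule nn_integral_cong_AE, rule eventually_mono[OF AE_lborel_singleton[of 0]])
    fix x :: real assume x0: "x \<noteq> 0"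
    show "(\<integral>\<^sup>+y. ennreal (f x) * ennreal (f y) * h (sqrt (x^2+y^2+2*x*y*t)) \<partial>lborel) = (\<integral>\<^sup>+u. A x u \<partial>lborel)"
    proof (cases "x > 0")
      case False
      then show ?thesis using x0 by (simp add: f_def A_def)
    next
      case True
      have "(\<integral>\<^sup>+y. ennreal (f x) * ennreal (f y) * h (sqrt (x^2+y^2+2*x*y*t)) \<partial>lborel)
          = \<bar>x\<bar> * (\<integral>\<^sup>+u. ennreal (f x) * ennreal (f (0 + x*u)) * h (sqrt (x^2+(0 + x*u)^2+2*x*(0 + x*u)*t)) \<partial>lborel)"
        by (rule nn_integral_real_affine) (use True in auto)
      also have "\<dots> = (\<integral>\<^sup>+u. ennreal x * (ennreal (f x) * ennreal (f (x*u)) * h (sqrt (x^2+(x*u)^2+2*x*(x*u)*t))) \<partial>lborel)"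
        by (subst nn_integral_cmult) (use True in simp_all)
      also have "\<dots> = (\<integral>\<^sup>+u. A x u \<partial>lborel)"
      proof (rule nn_integral_cong)
        fix u :: real
        show "ennreal x * (ennreal (f x) * ennreal (f (x*u)) * h (sqrt (x^2+(x*u)^2+2*x*(x*u)*t))) = A x u"
        proof (cases "u \<ge> 0")
          case False
          then have "\<not> 0 \<le> x * u" using True by (simp add: zero_le_mult_iff)
          then show ?thesis using False True by (simp add: f_def A_def)
        next
          case u: True
          have sqe: "sqrt (x^2+(x*u)^2+2*x*(x*u)*t) = x * sqrt (q u)"
            unfolding q_def using True q_pos[OF t u] by (intro sq) auto
          have fe: "ennreal x * (ennreal (f x) * ennreal (f (x*u))) = ennreal (x^(2*k+1) * u^k * exp (-(x^2)*(1+u^2)/2))"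
          proof -
            have "ennreal x * (ennreal (f x) * ennreal (f (x*u)))
               = ennreal (x * (x^k * exp (-(x^2)/2) * ((x*u)^k * exp (-((x*u)^2)/2))))"
              using True u unfolding f_def by (simp add: ennreal_mult[symmetric])
            then show ?thesis by (simp only: alg1)
          qed
          have Ae: "A x u = ennreal (x^(2*k+1) * u^k * exp (-(x^2)*(1+u^2)/2)) * h (x * sqrt (q u))"
            using True u by (simp add: A_def)
          show ?thesis unfolding Ae sqe fe[symmetric] by (simp only: mult.assoc)
        qed
      qed
      finally show ?thesis .
    qed
  qed
  also have "\<dots> = (\<integral>\<^sup>+u. \<integral>\<^sup>+x. A x u \<partial>lborel \<partial>lborel)"
    by (rule lborel_pair.Fubini'[symmetric]) (rule Am)
  also have "\<dots> = (\<integral>\<^sup>+u. \<integral>\<^sup>+w. B w u \<partial>lborel \<partial>lborel)"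
  proof (rule nn_integral_cong)
    fix u :: real
    show "(\<integral>\<^sup>+x. A x u \<partial>lborel) = (\<integral>\<^sup>+w. B w u \<partial>lborel)"
    proof (cases "u \<ge> 0")
      case False
      then show ?thesis by (simp add: A_def B_def)
    next
      case u: True
      define r where "r = sqrt (q u)"
      have qp: "q u > 0" unfolding q_def using q_pos[OF t u] .
      then have r: "r > 0" "r^2 = q u" unfolding r_def by auto
      have "(\<integral>\<^sup>+x. A x u \<partial>lborel) = \<bar>1/r\<bar> * (\<integral>\<^sup>+w. A (0 + 1/r * w) u \<partial>lborel)"
        using r by (intro nn_integral_real_affine) (auto simp: A_def)
      also have "\<dots> = (\<integral>\<^sup>+w. ennreal (1/r) * A (w/r) u \<partial>lborel)"
        using r by (subst nn_integral_cmult) (auto simp: A_def)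
      also have "\<dots> = (\<integral>\<^sup>+w. B w u \<partial>lborel)"
      proof (rule nn_integral_cong)
        fix w :: real
        show "ennreal (1/r) * A (w/r) u = B w u"
        proof (cases "w > 0")
          case False
          then have "\<not> 0 < w / r" using r by (simp add: zero_less_divide_iff not_less)
          then show ?thesis using False by (simp add: A_def B_def)
        next
          case w: True
          have "ennreal (1/r) * ennreal ((w/r)^(2*k+1) * u^k * exp (-((w/r)^2)*(1+u^2)/2))
              = ennreal (w^(2*k+1) * G w u)"
          proof -
            have ag: "1/r * ((w/r)^(2*k+1) * u^k * exp (-((w/r)^2)*(1+u^2)/2)) = w^(2*k+1) * G w u"
              unfolding G_def r(2)[symmetric] by (rule alg2[OF r(1)])
            have "ennreal (1/r) * ennreal ((w/r)^(2*k+1) * u^k * exp (-((w/r)^2)*(1+u^2)/2))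
              = ennreal (1/r * ((w/r)^(2*k+1) * u^k * exp (-((w/r)^2)*(1+u^2)/2)))"
              by (rule ennreal_mult[symmetric]) (use r w u in auto)
            then show ?thesis unfolding ag .
          qed
          moreover have "w / r * sqrt (q u) = w" using r unfolding r_def by simp
          ultimately show ?thesis using w u r unfolding A_def B_def
            by (simp add: mult.assoc[symmetric])
        qed
      qed
      finally show ?thesis .
    qed
  qed
  also have "\<dots> = (\<integral>\<^sup>+w. \<integral>\<^sup>+u. B w u \<partial>lborel \<partial>lborel)"
    by (rule lborel_pair.Fubini') (rule Bm)
  also have "\<dots> = (\<integral>\<^sup>+w. ennreal (if 0 < w then w^(2*k+1) * (LBINT \<phi>=0..pi/2. K w \<phi>) else 0) * h w \<partial>lborel)"
  proof (rule nn_integral_cong)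
    fix w :: real
    show "(\<integral>\<^sup>+u. B w u \<partial>lborel) = ennreal (if 0 < w then w^(2*k+1) * (LBINT \<phi>=0..pi/2. K w \<phi>) else 0) * h w"
    proof (cases "w > 0")
      case False
      then show ?thesis by (simp add: B_def)
    next
      case w: True
      have "(\<integral>\<^sup>+u. B w u \<partial>lborel) = (\<integral>\<^sup>+u. (ennreal (w^(2*k+1)) * h w) * (ennreal (G w u) * indicator {0..} u) \<partial>lborel)"
      proof (rule nn_integral_cong)
        fix u :: real
        show "B w u = (ennreal (w^(2*k+1)) * h w) * (ennreal (G w u) * indicator {0..} u)"
        proof (cases "u \<ge> 0")
          case u: True
          have "G w u \<ge> 0" unfolding G_def using q_pos[OF t u] u by (simp add: q_def)
          then show ?thesis using u w unfolding B_def by (simp add: ennreal_mult ac_simps)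
        qed (simp add: B_def)
      qed
      also have "\<dots> = (ennreal (w^(2*k+1)) * h w) * (\<integral>\<^sup>+u. ennreal (G w u) * indicator {0..} u \<partial>lborel)"
        unfolding G_def by (subst nn_integral_cmult) auto
      also have "(\<integral>\<^sup>+u. ennreal (G w u) * indicator {0..} u \<partial>lborel) = ennreal (LBINT \<phi>=0..pi/2. K w \<phi>)"
        unfolding G_def K_def q_def by (rule key[OF t])
      finally show ?thesis using w by (simp add: ennreal_mult' ac_simps)
    qed
  qed
  finally show ?thesis .
qed


theorem lemma4p2:
  fixes M :: "'s measure" and d :: nat and \<theta> :: real and a b :: "'s \<Rightarrow> real"
  assumes "prob_space M"
    and "d \<ge> 1"
    and "0 \<le> \<theta>" and "\<theta> < pi"
    and "distributed M lborel a (\<lambda>x. ennreal (chi_density d x))"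
    and "distributed M lborel b (\<lambda>x. ennreal (chi_density d x))"
    and "prob_space.indep_var M borel a borel b"
  shows "distributed M lborel
           (\<lambda>\<omega>. sqrt ((a \<omega>)\<^sup>2 + (b \<omega>)\<^sup>2 + 2 * a \<omega> * b \<omega> * cos \<theta>))
           (\<lambda>w. ennreal (p_theta d \<theta> w))"
proof -
  interpret P: prob_space M by fact
  obtain k where dk: "d = Suc k" using assms(2) by (cases d) auto
  define t where "t = cos \<theta>"
  have t: "-1 < t" unfolding t_def using cos_monotone_0_pi[of \<theta> pi] assms(3,4) by simp
  define c0 where "c0 = 1 / (2 powr (real d / 2 - 1) * Gamma (real d / 2))"
  have c0: "c0 > 0" unfolding c0_def using dk by simp
  define f where "f = (\<lambda>x::real. if 0 \<le> x then x^k * exp (-(x^2)/2) else 0)"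
  define K where "K = (\<lambda>w \<phi>. (sin \<phi> * cos \<phi>)^k * exp (- (w^2) / (2 * (1 + sin (2*\<phi>) * t))) / (1 + sin (2*\<phi>) * t) ^ Suc k)"
  define R where "R w = (if 0 < w then w^(2*k+1) * (LBINT \<phi>=0..pi/2. K w \<phi>) else 0)" for w
  have chi: "chi_density d x = c0 * f x" for x unfolding chi_density_def c0_def f_def dk by simp
  have c0sq: "1 / (2 powr (real d - 2) * (Gamma (real d / 2))\<^sup>2) = c0^2"
  proof -
    have "2 powr (real d - 2) = 2 powr (real d / 2 - 1) * 2 powr (real d / 2 - 1)"
      by (simp add: powr_add[symmetric])
    then show ?thesis unfolding c0_def by (simp add: power2_eq_square)
  qed
  have pth: "p_theta d \<theta> w = c0^2 * R w" for w
  proof (cases "w > 0")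
    case True
    then show ?thesis unfolding p_theta_def R_def K_def t_def c0sq[symmetric] using dk by simp
  next
    case False
    have "2 * d - 1 = Suc (2*k)" using dk by simp
    then show ?thesis using False unfolding p_theta_def R_def by auto
  qed
  have am[measurable]: "a \<in> borel_measurable M" using distributed_measurable[OF assms(5)] by simp
  have bm[measurable]: "b \<in> borel_measurable M" using distributed_measurable[OF assms(6)] by simp
  have Km[measurable]: "case_prod K \<in> borel_measurable (borel \<Otimes>\<^sub>M lborel)" unfolding K_def by measurable
  have Rm[measurable]: "R \<in> borel_measurable borel"
    unfolding R_def interval_lebesgue_integral_def set_lebesgue_integral_def by measurable
  have ind: "P.indep_var lborel a lborel b" by (rule indep_lborel[OF assms(1,7)])
  have J: "distributed M (lborel \<Otimes>\<^sub>M lborel) (\<lambda>\<omega>. (a \<omega>, b \<omega>))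
      (\<lambda>(x,y). ennreal (chi_density d x) * ennreal (chi_density d y))"
    by (rule P.distributed_joint_indep[OF sigma_finite_lborel sigma_finite_lborel assms(5,6) ind])
  let ?W = "\<lambda>\<omega>. sqrt ((a \<omega>)\<^sup>2 + (b \<omega>)\<^sup>2 + 2 * a \<omega> * b \<omega> * cos \<theta>)"
  have Wm[measurable]: "?W \<in> borel_measurable M" by measurable
  have pm[measurable]: "(\<lambda>w. ennreal (p_theta d \<theta> w)) \<in> borel_measurable borel"
    unfolding pth by measurable
  have eq: "emeasure (distr M lborel ?W) A = emeasure (density lborel (\<lambda>w. ennreal (p_theta d \<theta> w))) A"
    if A: "A \<in> sets borel" for A
  proof -
    have [measurable]: "A \<in> sets borel" by fact
    have "emeasure (distr M lborel ?W) A = (\<integral>\<^sup>+x. indicator A x \<partial>distr M lborel ?W)"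
      by (rule nn_integral_indicator[symmetric]) simp
    also have "\<dots> = (\<integral>\<^sup>+\<omega>. indicator A (?W \<omega>) \<partial>M)"
      by (rule nn_integral_distr) auto
    also have "\<dots> = (\<integral>\<^sup>+z. (\<lambda>(x,y). ennreal (chi_density d x) * ennreal (chi_density d y)) z *
          (\<lambda>(x,y). indicator A (sqrt (x^2+y^2+2*x*y*t)) :: ennreal) z \<partial>(lborel \<Otimes>\<^sub>M lborel))"
      by (subst distributed_nn_integral[OF J]) (auto simp: t_def)
    also have "\<dots> = (\<integral>\<^sup>+x. \<integral>\<^sup>+y. ennreal (chi_density d x) * ennreal (chi_density d y) * indicator A (sqrt (x^2+y^2+2*x*y*t)) \<partial>lborel \<partial>lborel)"
      by (subst lborel.nn_integral_fst[symmetric]) (auto simp: chi_density_def)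
    also have "\<dots> = (\<integral>\<^sup>+x. \<integral>\<^sup>+y. ennreal (c0^2) * (ennreal (f x) * ennreal (f y) * indicator A (sqrt (x^2+y^2+2*x*y*t))) \<partial>lborel \<partial>lborel)"
      using c0 unfolding chi f_def
      by (intro nn_integral_cong) (simp add: ennreal_mult power2_eq_square ac_simps)
    also have "\<dots> = ennreal (c0^2) * (\<integral>\<^sup>+x. \<integral>\<^sup>+y. ennreal (f x) * ennreal (f y) * indicator A (sqrt (x^2+y^2+2*x*y*t)) \<partial>lborel \<partial>lborel)"
      unfolding f_def by (simp add: nn_integral_cmult)
    also have "(\<integral>\<^sup>+x. \<integral>\<^sup>+y. ennreal (f x) * ennreal (f y) * indicator A (sqrt (x^2+y^2+2*x*y*t)) \<partial>lborel \<partial>lborel)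
        = (\<integral>\<^sup>+w. ennreal (R w) * indicator A w \<partial>lborel)"
      unfolding f_def R_def K_def by (rule chain[OF t]) simp
    also have "ennreal (c0^2) * (\<integral>\<^sup>+w. ennreal (R w) * indicator A w \<partial>lborel)
        = (\<integral>\<^sup>+w. ennreal (p_theta d \<theta> w) * indicator A w \<partial>lborel)"
      unfolding pth by (subst nn_integral_cmult[symmetric]) (auto simp: ennreal_mult'' ac_simps)
    also have "\<dots> = emeasure (density lborel (\<lambda>w. ennreal (p_theta d \<theta> w))) A"
      by (simp add: emeasure_density)
    finally show ?thesis .
  qed
  show ?thesis unfolding distributed_def
  proof (intro conjI)
    show "distr M lborel ?W = density lborel (\<lambda>w. ennreal (p_theta d \<theta> w))"
      by (rule measure_eqI) (auto intro: eq)
  qed auto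
qed

end
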